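(* For a finite rooted tree $T$, define for each vertex $v$ the polynomial $C_v(x)\in\mathbb{Z}[x]$ inductively by $C_v(x)=x+2$ if $v$ is a leaf, and $C_v(x)=x^{n_v}+2x\prod_{i=1}^{\deg(v)}C_{v_i}(x)+2$ if $v$ is internal, where $n_v$ is the number of vertices of the subtree $T_v$ rooted at $v$ and $v_1,\dots,v_{\deg(v)}$ are the children of $v$; set $C_T(x)=C_r(x)$ where $r$ is the root of $T$. Then $C_T$ is a complete invariant for rooted trees: for any two finite rooted trees $T$ and $T'$, $C_T(x)=C_{T'}(x)$ if and only if $T$ and $T'$ are isomorphic as rooted trees.
   Context: An isomorphism of rooted trees is a graph isomorphism mapping root to root. $T_v$ consists of $v$ and all its descendants. *)

theory Defs
  imports "HOL-Computational_Algebra.Polynomial"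
begin

definition rooted_tree :: "'a set \<Rightarrow> ('a \<times> 'a) set \<Rightarrow> 'a \<Rightarrow> bool" where
  "rooted_tree V E r \<longleftrightarrow>
     finite V \<and> r \<in> V \<and> E \<subseteq> V \<times> V \<and> sym E \<and> (\<forall>v. (v, v) \<notin> E) \<and>
     (\<forall>u\<in>V. \<forall>v\<in>V. (u, v) \<in> E\<^sup>*) \<and>
     card {{u, v} | u v. (u, v) \<in> E} = card V - 1"

text \<open>w is a child of v: w is a neighbour of v, w is not the root, and v is still
reachable from the root after deleting w (so w does not lie on the root-v path).\<close>

definition child :: "'a set \<Rightarrow> ('a \<times> 'a) set \<Rightarrow> 'a \<Rightarrow> 'a \<Rightarrow> 'a \<Rightarrow> bool" where
  "child V E r v w \<longleftrightarrow> (v, w) \<in> E \<and> w \<noteq> r \<and>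
     (r, v) \<in> (E \<inter> ((V - {w}) \<times> (V - {w})))\<^sup>*"

definition children :: "'a set \<Rightarrow> ('a \<times> 'a) set \<Rightarrow> 'a \<Rightarrow> 'a \<Rightarrow> 'a set" where
  "children V E r v = {w. child V E r v w}"

definition subtree :: "'a set \<Rightarrow> ('a \<times> 'a) set \<Rightarrow> 'a \<Rightarrow> 'a \<Rightarrow> 'a set" where
  "subtree V E r v = {w. (v, w) \<in> {(a, b). child V E r a b}\<^sup>*}"

inductive has_C :: "'a set \<Rightarrow> ('a \<times> 'a) set \<Rightarrow> 'a \<Rightarrow> 'a \<Rightarrow> int poly \<Rightarrow> bool"
  for V E r where
  leaf: "children V E r v = {} \<Longrightarrow> has_C V E r v [:2, 1:]"
| internal: "children V E r v \<noteq> {} \<Longrightarrow>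
     (\<And>w. w \<in> children V E r v \<Longrightarrow> has_C V E r w (f w)) \<Longrightarrow>
     has_C V E r v
       (monom 1 (card (subtree V E r v))
        + smult 2 ([:0, 1:] * (\<Prod>w\<in>children V E r v. f w)) + [:2:])"

definition C_poly :: "'a set \<Rightarrow> ('a \<times> 'a) set \<Rightarrow> 'a \<Rightarrow> 'a \<Rightarrow> int poly" where
  "C_poly V E r v = (THE p. has_C V E r v p)"

definition C_tree :: "'a set \<Rightarrow> ('a \<times> 'a) set \<Rightarrow> 'a \<Rightarrow> int poly" where
  "C_tree V E r = C_poly V E r r"

definition rooted_tree_iso ::
  "'a set \<Rightarrow> ('a \<times> 'a) set \<Rightarrow> 'a \<Rightarrow> 'b set \<Rightarrow> ('b \<times> 'b) set \<Rightarrow> 'b \<Rightarrow> bool" where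
  "rooted_tree_iso V E r V' E' r' \<longleftrightarrow>
     (\<exists>f. bij_betw f V V' \<and> f r = r' \<and>
          (\<forall>u\<in>V. \<forall>v\<in>V. (u, v) \<in> E \<longleftrightarrow> (f u, f v) \<in> E'))"

end

theory Submission
  imports Defs "HOL-Computational_Algebra.Polynomial_Factorial" "HOL-Library.Disjoint_Sets"
begin

lemma eis_aux:
  fixes p a b :: "int poly"
  assumes p: "p = a * b" and a0: "even (coeff a 0)" and b0: "odd (coeff b 0)"
    and db: "0 < degree b" and ev: "\<forall>i<degree p. even (coeff p i)" and lp: "odd (lead_coeff p)"
  shows False
proof -
  have "p \<noteq> 0" using lp by auto
  hence an: "a \<noteq> 0" and bn: "b \<noteq> 0" using p by auto
  have dp: "degree p = degree a + degree b" using p an bn by (simp add: degree_mult_eq)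
  have "lead_coeff p = lead_coeff a * lead_coeff b" using p by (simp add: lead_coeff_mult)
  hence la: "odd (lead_coeff a)" using lp by auto
  define k where "k = (LEAST i. odd (coeff a i))"
  have ka: "odd (coeff a k)" unfolding k_def using la by (rule LeastI)
  have kle: "k \<le> degree a" unfolding k_def using la by (rule Least_le)
  have kev: "\<And>i. i < k \<Longrightarrow> even (coeff a i)" unfolding k_def using not_less_Least by blast
  have "coeff p k = (\<Sum>i\<le>k. coeff a i * coeff b (k - i))" using p by (simp add: coeff_mult)
  also have "\<dots> = (\<Sum>i<k. coeff a i * coeff b (k - i)) + coeff a k * coeff b 0"
    by (simp add: lessThan_Suc_atMost[symmetric])
  finally have ck: "coeff p k = (\<Sum>i<k. coeff a i * coeff b (k - i)) + coeff a k * coeff b 0" .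
  have "even (\<Sum>i<k. coeff a i * coeff b (k - i))"
    by (rule dvd_sum) (simp add: kev)
  moreover have "odd (coeff a k * coeff b 0)" using ka b0 by simp
  ultimately have "odd (coeff p k)" using ck by simp
  moreover have "k < degree p" using kle dp db by simp
  ultimately show False using ev by auto
qed

lemma const_unit:
  fixes c m :: int
  assumes "c dvd 2" "odd m" "c dvd m"
  shows "c dvd 1"
proof -
  have "c \<noteq> 0" using assms by auto
  have "\<bar>c\<bar> \<le> 2" using assms(1) using dvd_imp_le_int[of 2 c] by simp
  moreover have "\<bar>c\<bar> \<noteq> 2" using assms(2,3) by (metis abs_dvd_iff dvd_trans)
  ultimately have "\<bar>c\<bar> = 1" using \<open>c \<noteq> 0\<close> by linarith
  thus ?thesis by (simp add: abs_eq_iff' )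
qed

lemma deg0_unit:
  fixes p a b :: "int poly"
  assumes p: "p = a * b" and da: "degree a = 0" and c0: "coeff p 0 = 2" and lp: "odd (lead_coeff p)"
  shows "a dvd 1"
proof -
  obtain c where ac: "a = [:c:]" using da by (metis degree_eq_zeroE)
  have ps: "p = smult c b" using p ac by simp
  have "c dvd 2" using c0 ps by (metis coeff_smult dvd_triv_left)
  moreover have "c dvd lead_coeff p" using ps by simp
  ultimately have "c dvd 1" using const_unit lp by blast
  thus ?thesis using ac by (simp add: is_unit_poly_iff)
qed

lemma eis_irred:
  fixes p :: "int poly"
  assumes d: "degree p \<ge> 1" and c0: "coeff p 0 = 2" and ev: "\<forall>i<degree p. even (coeff p i)"
    and lp: "odd (lead_coeff p)"
  shows "irreducible p"
proof (rule irreducibleI)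
  show "p \<noteq> 0" using lp by auto
  show "\<not> p dvd 1" using d by (auto simp: is_unit_poly_iff)
  fix a b assume p: "p = a * b"
  show "a dvd 1 \<or> b dvd 1"
  proof (cases "degree a = 0")
    case True thus ?thesis using deg0_unit[OF p True c0 lp] by blast
  next
    case na: False
    show ?thesis
    proof (cases "degree b = 0")
      case True thus ?thesis using deg0_unit[of p b a] p c0 lp by (simp add: mult.commute)
    next
      case nb: False
      have prod: "coeff a 0 * coeff b 0 = 2" using p c0 by (simp add: coeff_mult_0)
      have "(even (coeff a 0) \<and> odd (coeff b 0)) \<or> (even (coeff b 0) \<and> odd (coeff a 0))"
      proof -
        have "\<not> (odd (coeff a 0) \<and> odd (coeff b 0))" using prod by (metis even_mult_iff even_numeral)
        moreover have "\<not> (even (coeff a 0) \<and> even (coeff b 0))"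
        proof
          assume "even (coeff a 0) \<and> even (coeff b 0)"
          then obtain x y where "coeff a 0 = 2 * x" "coeff b 0 = 2 * y" by blast
          with prod have "4 * (x * y) = 2" by (simp add: algebra_simps)
          thus False by presburger
        qed
        ultimately show ?thesis by blast
      qed
      thus ?thesis
      proof
        assume "even (coeff a 0) \<and> odd (coeff b 0)"
        thus ?thesis using eis_aux[OF p] nb ev lp by auto
      next
        assume "even (coeff b 0) \<and> odd (coeff a 0)"
        moreover have "p = b * a" using p by (simp add: mult.commute)
        ultimately show ?thesis using eis_aux[of p b a] na ev lp by auto
      qed
    qed
  qed
qed

lemma cnt_img_card:
  assumes "finite A"
  shows "count (image_mset f (mset_set A)) b = card {a \<in> A. f a = b}"
  using assms
proof (induct A)
  case empty
  show ?case by simp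
next
  case (insert x F)
  show ?case
  proof (cases "f x = b")
    case True
    with insert.hyps
    have "count (image_mset f (mset_set (insert x F))) b = Suc (card {a \<in> F. f a = f x})"
      by auto
    also from insert.hyps(1,2) have "\<dots> = card (insert x {a \<in> F. f a = f x})"
      by simp
    also from \<open>f x = b\<close> have "card (insert x {a \<in> F. f a = f x}) = card {a \<in> insert x F. f a = b}"
      by (auto intro: arg_cong[where f="card"])
    finally show ?thesis
      using insert by auto
  next
    case False
    then have "{a \<in> F. f a = b} = {a \<in> insert x F. f a = b}"
      by auto
    with insert False show ?thesis
      by simp
  qed
qed

lemma mset_match:
  fixes f :: "'a \<Rightarrow> 'c" and g :: "'b \<Rightarrow> 'c"
  assumes fA: "finite A" and fB: "finite B"
    and eq: "image_mset f (mset_set A) = image_mset g (mset_set B)"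
  shows "\<exists>h. bij_betw h A B \<and> (\<forall>x\<in>A. g (h x) = f x)"
proof -
  have "f ` A = g ` B"
    by (metis eq fA fB finite_set_mset_mset_set multiset.set_map)
  have "\<forall>b\<in>(f ` A). \<exists>p. bij_betw p {a \<in> A. f a = b} {a \<in> B. g a = b}"
  proof
    fix b
    from eq have "count (image_mset f (mset_set A)) b = count (image_mset g (mset_set B)) b"
      by simp
    with fA fB have "card {a \<in> A. f a = b} = card {a \<in> B. g a = b}"
      by (simp add: cnt_img_card)
    then show "\<exists>p. bij_betw p {a\<in>A. f a = b} {a \<in> B. g a = b}"
      using fA fB by (intro finite_same_card_bij) simp_all
  qed
  then have "\<exists>p. \<forall>b\<in>f ` A. bij_betw (p b) {a \<in> A. f a = b} {a \<in> B. g a = b}"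
    by (rule bchoice)
  then obtain p where p: "\<forall>b\<in>f ` A. bij_betw (p b) {a \<in> A. f a = b} {a \<in> B. g a = b}" ..
  have "disjoint_family_on (\<lambda>i. {a \<in> B. g a = i}) (f ` A)"
    by (auto simp: disjoint_family_on_def)
  moreover
  have "bij_betw (\<lambda>a. p (f a) a) {a \<in> A. f a = b} {a \<in> B. g a = b}" if "b \<in> f ` A" for b
    using p that by (subst bij_betw_cong[where g="p b"]) auto
  ultimately
  have "bij_betw (\<lambda>a. p (f a) a) (\<Union>b\<in>f ` A. {a \<in> A. f a = b}) (\<Union>b\<in>f ` A. {a \<in> B. g a = b})"
    by (rule bij_betw_UNION_disjoint)
  moreover have "(\<Union>b\<in>f ` A. {a \<in> A. f a = b}) = A"
    by auto
  moreover from \<open>f ` A = g ` B\<close> have "(\<Union>b\<in>f ` A. {a \<in> B. g a = b}) = B"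
    by auto
  ultimately have "bij_betw (\<lambda>a. p (f a) a) A B" by simp
  moreover from p have "\<forall>x\<in>A. g (p (f x) x) = f x"
    using bij_betwE by fastforce
  ultimately show ?thesis by blast
qed

definition good :: "int poly \<Rightarrow> nat \<Rightarrow> bool" where
  "good p n \<longleftrightarrow> degree p = n \<and> n \<ge> 1 \<and> coeff p 0 = 2 \<and> (\<forall>i<n. even (coeff p i))
      \<and> lead_coeff p > 0 \<and> odd (lead_coeff p)"

lemma good_leaf: "good [:2, 1:] 1"
  by (simp add: good_def)

lemma good_prime: "good p n \<Longrightarrow> prime p"
proof -
  assume g: "good p n"
  hence "irreducible p" unfolding good_def by (intro eis_irred) auto
  hence "prime_elem p" by (rule irreducible_imp_prime_elem)
  moreover have "lead_coeff p > 0" using g unfolding good_def by blast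
  hence "unit_factor (lead_coeff p) = 1" by simp
  hence "normalize p = p" by (simp add: normalize_poly_eq_map_poly)
  ultimately show "prime p" by (simp add: prime_def)
qed

lemma odd_prod: "finite S \<Longrightarrow> (\<forall>x\<in>S. odd (f x :: int)) \<Longrightarrow> odd (prod f S)"
  by (induction S rule: finite_induct) auto

lemma good_internal:
  fixes P :: "'a \<Rightarrow> int poly"
  assumes fS: "finite S" and g: "\<And>w. w \<in> S \<Longrightarrow> good (P w) (n w)" and N: "N = Suc (\<Sum>w\<in>S. n w)"
  shows "good (monom 1 N + smult 2 ([:0, 1:] * (\<Prod>w\<in>S. P w)) + [:2:]) N"
proof -
  define Q where "Q = (\<Prod>w\<in>S. P w)"
  have nz: "\<forall>w\<in>S. P w \<noteq> 0" using g unfolding good_def by fastforce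
  have dQ: "degree Q = N - 1" unfolding Q_def using degree_prod_eq_sum_degree[OF nz] g N
    by (simp add: good_def)
  have lQ: "lead_coeff Q = (\<Prod>w\<in>S. lead_coeff (P w))" unfolding Q_def by (simp add: lead_coeff_prod)
  have lQp: "lead_coeff Q > 0" unfolding lQ using g by (intro prod_pos) (metis good_def)
  have lQo: "odd (lead_coeff Q)" unfolding lQ using g fS proof (intro odd_prod ballI)
    fix w assume "w \<in> S" from g[OF this] show "odd (lead_coeff (P w))" unfolding good_def by blast
  qed
  define R where "R = monom 1 N + smult 2 ([:0, 1:] * Q) + [:2:]"
  have cR: "coeff R i = (if N = i then 1 else 0) + 2 * (if i = 0 then 0 else coeff Q (i - 1)) + (if i = 0 then 2 else 0)" for i
    unfolding R_def by (cases i) (auto simp: coeff_monom)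
  have N1: "N \<ge> 1" using N by simp
  have cN: "coeff R N = 1 + 2 * lead_coeff Q" using cR[of N] N1 dQ by simp
  have "degree R = N"
  proof (rule antisym)
    show "degree R \<le> N"
    proof (rule degree_le, intro allI impI)
      fix i assume "N < i"
      hence "coeff Q (i - 1) = 0" using dQ N1 by (intro coeff_eq_0) simp
      thus "coeff R i = 0" using cR[of i] \<open>N < i\<close> by simp
    qed
    show "N \<le> degree R" using cN lQp by (intro le_degree) simp
  qed
  moreover have "coeff R 0 = 2" using cR[of 0] N1 by simp
  moreover have "\<forall>i<N. even (coeff R i)" using cR by simp
  moreover have "lead_coeff R > 0" "odd (lead_coeff R)" using cN lQp lQo \<open>degree R = N\<close> by simp_all
  ultimately show ?thesis unfolding good_def R_def Q_def using N1 by simp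
qed

lemma prod_primes_eq:
  fixes P :: "'a \<Rightarrow> int poly" and P' :: "'b \<Rightarrow> int poly"
  assumes "finite S" "finite S'" "\<And>w. w \<in> S \<Longrightarrow> prime (P w)" "\<And>w. w \<in> S' \<Longrightarrow> prime (P' w)"
    and "(\<Prod>w\<in>S. P w) = (\<Prod>w\<in>S'. P' w)"
  shows "image_mset P (mset_set S) = image_mset P' (mset_set S')"
proof -
  have "image_mset P (mset_set S) = prime_factorization (prod_mset (image_mset P (mset_set S)))"
    using assms(1,3) by (subst prime_factorization_prod_mset_primes) auto
  also have "prod_mset (image_mset P (mset_set S)) = prod_mset (image_mset P' (mset_set S'))"
    using assms(5) by (simp add: prod_unfold_prod_mset)
  also have "prime_factorization \<dots> = image_mset P' (mset_set S')"
    using assms(2,4) by (subst prime_factorization_prod_mset_primes) auto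
  finally show ?thesis .
qed

locale rt =
  fixes V :: "'a set" and E :: "('a \<times> 'a) set" and r :: 'a
  assumes tree: "rooted_tree V E r"
begin

lemma finV: "finite V" and rV: "r \<in> V" and EV: "E \<subseteq> V \<times> V" and symE: "sym E"
  and irr: "(v, v) \<notin> E" and conn: "u \<in> V \<Longrightarrow> w \<in> V \<Longrightarrow> (u, w) \<in> E\<^sup>*"
  and cardE: "card {{u, v} | u v. (u, v) \<in> E} = card V - 1"
  using tree unfolding rooted_tree_def by auto

lemma EV': "(u, v) \<in> E \<Longrightarrow> u \<in> V \<and> v \<in> V" using EV by auto

definition d where "d v = (LEAST n. (r, v) \<in> E ^^ n)"

lemma d_ex: "v \<in> V \<Longrightarrow> (r, v) \<in> E ^^ d v"
proof -
  assume "v \<in> V"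
  then obtain n where "(r, v) \<in> E ^^ n" using conn[OF rV] rtrancl_power by blast
  thus ?thesis unfolding d_def by (rule LeastI)
qed

lemma d_r: "d r = 0"
proof -
  have "(r, r) \<in> E ^^ 0" by simp
  hence "d r \<le> 0" unfolding d_def by (rule Least_le)
  thus ?thesis by simp
qed

lemma d_edge: "(u, v) \<in> E \<Longrightarrow> d v \<le> Suc (d u)"
proof -
  assume e: "(u, v) \<in> E"
  hence "u \<in> V" using EV' by blast
  hence "(r, v) \<in> E ^^ Suc (d u)" using d_ex e by auto
  thus ?thesis unfolding d_def by (rule Least_le)
qed

lemma d_par_ex: "v \<in> V \<Longrightarrow> v \<noteq> r \<Longrightarrow> \<exists>u. (u, v) \<in> E \<and> Suc (d u) = d v"
proof -
  assume v: "v \<in> V" "v \<noteq> r"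
  have p: "(r, v) \<in> E ^^ d v" using d_ex v by blast
  then obtain m where m: "d v = Suc m" using v by (cases "d v") auto
  with p obtain u where u1: "(r, u) \<in> E ^^ m" and u2: "(u, v) \<in> E" by auto
  have "d u \<le> m" using u1 unfolding d_def by (rule Least_le)
  moreover have "d v \<le> Suc (d u)" using d_edge u2 .
  ultimately have "Suc (d u) = d v" using m by simp
  thus ?thesis using u2 by blast
qed

definition par where "par v = (SOME u. (u, v) \<in> E \<and> Suc (d u) = d v)"

lemma par: "v \<in> V \<Longrightarrow> v \<noteq> r \<Longrightarrow> (par v, v) \<in> E \<and> Suc (d (par v)) = d v"
  unfolding par_def using d_par_ex by (rule someI_ex) 

lemma parV: "v \<in> V \<Longrightarrow> v \<noteq> r \<Longrightarrow> par v \<in> V"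
  using par EV' by blast

lemma edges_par: "(u, v) \<in> E \<Longrightarrow> (v \<noteq> r \<and> u = par v) \<or> (u \<noteq> r \<and> v = par u)"
proof -
  assume e: "(u, v) \<in> E"
  define U where "U = {{u, v} | u v. (u, v) \<in> E}"
  define P where "P = (\<lambda>v. {v, par v}) ` (V - {r})"
  have PU: "P \<subseteq> U"
  proof
    fix x assume "x \<in> P"
    then obtain w where w: "w \<in> V - {r}" "x = {w, par w}" unfolding P_def by blast
    have "(par w, w) \<in> E" using par w by blast
    thus "x \<in> U" unfolding U_def using w by blast
  qed
  have inj: "inj_on (\<lambda>v. {v, par v}) (V - {r})"
  proof (rule inj_onI)
    fix x y assume x: "x \<in> V - {r}" and y: "y \<in> V - {r}" and eq: "{x, par x} = {y, par y}"
    show "x = y"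
    proof (rule ccontr)
      assume "x \<noteq> y"
      hence a: "x = par y" "y = par x" using eq by (auto simp: doubleton_eq_iff)
      have "Suc (d (par y)) = d y" using par[of y] y by simp
      moreover have "Suc (d (par x)) = d x" using par[of x] x by simp
      ultimately have "Suc (d x) = d y" "Suc (d y) = d x" using a by metis+
      thus False by simp
    qed
  qed
  have cP: "card P = card V - 1" unfolding P_def using card_image[OF inj] finV rV by simp
  have fU: "finite U"
  proof -
    have "U \<subseteq> Pow V" unfolding U_def using EV by auto
    thus ?thesis using finV by (simp add: finite_subset)
  qed
  have "P = U" using card_subset_eq[OF fU PU] cP cardE unfolding U_def by simp
  moreover have "{u, v} \<in> U" unfolding U_def using e by blast
  ultimately obtain x where x: "x \<in> V - {r}" "{u, v} = {x, par x}" unfolding P_def by blast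
  from x(2) have "(u = x \<and> v = par x) \<or> (u = par x \<and> v = x)" by (simp add: doubleton_eq_iff)
  thus ?thesis using x(1) by blast
qed

lemma reach_low: "u \<in> V \<Longrightarrow> (r, u) \<in> (E \<inter> ({x \<in> V. d x \<le> d u} \<times> {x \<in> V. d x \<le> d u}))\<^sup>*"
proof (induction "d u" arbitrary: u rule: less_induct)
  case less
  show ?case
  proof (cases "u = r")
    case True thus ?thesis by simp
  next
    case False
    define p where "p = par u"
    have pu: "(p, u) \<in> E" "Suc (d p) = d u" "p \<in> V" using par[OF less.prems False] parV[OF less.prems False]
      unfolding p_def by auto
    have "(r, p) \<in> (E \<inter> ({x \<in> V. d x \<le> d p} \<times> {x \<in> V. d x \<le> d p}))\<^sup>*"
      using less.hyps[of p] pu by simp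
    also have "\<dots> \<subseteq> (E \<inter> ({x \<in> V. d x \<le> d u} \<times> {x \<in> V. d x \<le> d u}))\<^sup>*"
      using pu by (intro rtrancl_mono) auto
    finally have "(r, p) \<in> (E \<inter> ({x \<in> V. d x \<le> d u} \<times> {x \<in> V. d x \<le> d u}))\<^sup>*" .
    moreover have "(p, u) \<in> E \<inter> ({x \<in> V. d x \<le> d u} \<times> {x \<in> V. d x \<le> d u})"
      using pu less.prems by auto
    ultimately show ?thesis by (rule rtrancl_into_rtrancl)
  qed
qed

lemma child_iff: "child V E r v w \<longleftrightarrow> w \<in> V \<and> w \<noteq> r \<and> v = par w"
proof
  assume "w \<in> V \<and> w \<noteq> r \<and> v = par w"
  hence w: "w \<in> V" "w \<noteq> r" "v = par w" by auto
  have pw: "(v, w) \<in> E" "Suc (d v) = d w" "v \<in> V" using par[OF w(1,2)] parV[OF w(1,2)] w(3) by auto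
  have "(r, v) \<in> (E \<inter> ({x \<in> V. d x \<le> d v} \<times> {x \<in> V. d x \<le> d v}))\<^sup>*" using reach_low pw by blast
  also have "\<dots> \<subseteq> (E \<inter> ((V - {w}) \<times> (V - {w})))\<^sup>*" using pw by (intro rtrancl_mono) auto
  finally show "child V E r v w" unfolding child_def using pw w by blast
next
  assume c: "child V E r v w"
  hence e: "(v, w) \<in> E" and wr: "w \<noteq> r" and p: "(r, v) \<in> (E \<inter> ((V - {w}) \<times> (V - {w})))\<^sup>*"
    unfolding child_def by auto
  have wV: "w \<in> V" using e EV' by blast
  show "w \<in> V \<and> w \<noteq> r \<and> v = par w"
  proof (rule ccontr)
    assume "\<not> ?thesis"
    hence vr: "v \<noteq> r" and wp: "w = par v" using edges_par[OF e] wV wr by auto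
    define Pr where "Pr = {(par y, y) | y. y \<in> V - {r}}"
    define D where "D = {x. (w, x) \<in> Pr\<^sup>*}"
    have Dstep: "y \<in> D" if x: "x \<in> D" "x \<noteq> w" and xy: "(x, y) \<in> E" for x y
    proof -
      from edges_par[OF xy] show ?thesis
      proof
        assume "y \<noteq> r \<and> x = par y"
        moreover have "y \<in> V" using xy EV' by blast
        ultimately have "(x, y) \<in> Pr" unfolding Pr_def by blast
        thus ?thesis using x unfolding D_def by auto
      next
        assume a: "x \<noteq> r \<and> y = par x"
        from x have "(w, x) \<in> Pr\<^sup>*" "w \<noteq> x" unfolding D_def by auto
        then obtain z where "(w, z) \<in> Pr\<^sup>*" "(z, x) \<in> Pr" by (metis rtranclE)
        moreover hence "z = par x" unfolding Pr_def by auto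
        ultimately show ?thesis using a unfolding D_def by auto
      qed
    qed
    have rD: "r \<notin> D"
    proof
      assume "r \<in> D"
      hence "(w, r) \<in> Pr\<^sup>*" unfolding D_def by auto
      then obtain z where "(z, r) \<in> Pr" using wr by (metis rtranclE)
      thus False unfolding Pr_def by auto
    qed
    have "x \<notin> D - {w}" if "(r, x) \<in> (E \<inter> ((V - {w}) \<times> (V - {w})))\<^sup>*" for x
      using that
    proof (induction rule: rtrancl_induct)
      case base thus ?case using rD by auto
    next
      case (step x y)
      show ?case
      proof
        assume "y \<in> D - {w}"
        moreover have "(y, x) \<in> E" using step(2) symE by (auto dest: symD)
        ultimately have "x \<in> D" using Dstep by blast
        thus False using step by auto
      qed
    qed
    hence "v \<notin> D - {w}" using p by blast
    moreover have "(w, v) \<in> Pr" unfolding Pr_def using wp vr e EV' by blast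
    hence "v \<in> D" unfolding D_def by auto
    moreover have "v \<noteq> w" using e irr by auto
    ultimately show False by blast
  qed
qed

abbreviation ch where "ch \<equiv> child V E r"
abbreviation CH where "CH \<equiv> {(a, b). child V E r a b}"
abbreviation sub where "sub \<equiv> subtree V E r"
abbreviation chs where "chs \<equiv> children V E r"

lemma ch_V: "ch a b \<Longrightarrow> a \<in> V \<and> b \<in> V \<and> b \<noteq> r"
  using child_iff parV by auto

lemma ch_uniq: "ch a b \<Longrightarrow> ch a' b \<Longrightarrow> a = a'"
  using child_iff by auto

lemma ch_d: "ch a b \<Longrightarrow> d a < d b"
  using child_iff par by fastforce

lemma root_reach: "w \<in> V \<Longrightarrow> (r, w) \<in> CH\<^sup>*"
proof (induction "d w" arbitrary: w rule: less_induct)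
  case less
  show ?case
  proof (cases "w = r")
    case True thus ?thesis by simp
  next
    case False
    have c: "ch (par w) w" using child_iff less.prems False by simp
    have "(r, par w) \<in> CH\<^sup>*" using less.hyps[of "par w"] ch_d[OF c] ch_V[OF c] by simp
    thus ?thesis using c by (simp add: rtrancl_into_rtrancl)
  qed
qed

lemma E_iff: assumes "u \<in> V" "v \<in> V" shows "(u, v) \<in> E \<longleftrightarrow> ch u v \<or> ch v u"
proof
  assume "(u, v) \<in> E"
  from edges_par[OF this] show "ch u v \<or> ch v u"
    using child_iff \<open>u \<in> V\<close> \<open>v \<in> V\<close> by auto
next
  assume "ch u v \<or> ch v u"
  thus "(u, v) \<in> E" unfolding child_def using symE by (auto dest: symD)
qed

end

context rt begin

abbreviation Cp where "Cp \<equiv> C_poly V E r"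

lemma chs_iff: "w \<in> chs v \<longleftrightarrow> ch v w" by (simp add: children_def)
lemma sub_iff: "w \<in> sub v \<longleftrightarrow> (v, w) \<in> CH\<^sup>*" by (simp add: subtree_def)

lemma sub_self: "v \<in> sub v" by (simp add: sub_iff)

lemma sub_V: assumes "v \<in> V" shows "sub v \<subseteq> V"
proof
  fix x assume "x \<in> sub v"
  hence "(v, x) \<in> CH\<^sup>*" by (simp add: sub_iff)
  thus "x \<in> V"
  proof (induction rule: rtrancl_induct)
    case base thus ?case using assms .
  next
    case (step y z) thus ?case using ch_V by blast
  qed
qed

lemma fin_sub: "v \<in> V \<Longrightarrow> finite (sub v)"
  using sub_V finV finite_subset by blast

lemma chs_V: "chs v \<subseteq> V" using ch_V chs_iff by blast
lemma fin_chs: "finite (chs v)" using chs_V finV finite_subset by blast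

lemma sub_d: assumes "w \<in> sub v" shows "d v \<le> d w"
proof -
  have "(v, w) \<in> CH\<^sup>*" using assms by (simp add: sub_iff)
  thus ?thesis
  proof (induction rule: rtrancl_induct)
    case base thus ?case by simp
  next
    case (step y z) thus ?case using ch_d[of y z] by simp
  qed
qed

lemma sub_unfold: "sub v = insert v (\<Union>w\<in>chs v. sub w)"
proof
  show "sub v \<subseteq> insert v (\<Union>w\<in>chs v. sub w)"
  proof
    fix x assume "x \<in> sub v"
    hence "(v, x) \<in> CH\<^sup>*" by (simp add: sub_iff)
    thus "x \<in> insert v (\<Union>w\<in>chs v. sub w)"
    proof (cases rule: converse_rtranclE)
      case base thus ?thesis by simp
    next
      case (step w)
      hence "w \<in> chs v" "x \<in> sub w" by (simp_all add: chs_iff sub_iff)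
      thus ?thesis by blast
    qed
  qed
next
  show "insert v (\<Union>w\<in>chs v. sub w) \<subseteq> sub v"
  proof
    fix x assume "x \<in> insert v (\<Union>w\<in>chs v. sub w)"
    thus "x \<in> sub v"
    proof
      assume "x = v" thus ?thesis by (simp add: sub_self)
    next
      assume "x \<in> (\<Union>w\<in>chs v. sub w)"
      then obtain w where "ch v w" "(w, x) \<in> CH\<^sup>*" by (auto simp: chs_iff sub_iff)
      hence "(v, x) \<in> CH\<^sup>*" by (simp add: converse_rtrancl_into_rtrancl)
      thus ?thesis by (simp add: sub_iff)
    qed
  qed
qed

lemma notin_sub_child: "w \<in> chs v \<Longrightarrow> v \<notin> sub w"
  using sub_d ch_d chs_iff by fastforce

lemma comparable:
  assumes "(w', x) \<in> CH\<^sup>*"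
  shows "(w, x) \<in> CH\<^sup>* \<Longrightarrow> (w, w') \<in> CH\<^sup>* \<or> (w', w) \<in> CH\<^sup>*"
  using assms
proof (induction rule: rtrancl_induct)
  case base thus ?case by simp
next
  case (step y z)
  from step.prems show ?case
  proof (cases rule: rtranclE)
    case base
    have "(w', z) \<in> CH\<^sup>*" using step.hyps by (simp add: rtrancl_into_rtrancl)
    thus ?thesis using base by simp
  next
    case (step y')
    hence "y' = y" using ch_uniq step.hyps(2) by auto
    thus ?thesis using step step.IH by simp
  qed
qed

lemma sub_disj: assumes "w1 \<in> chs v" "w2 \<in> chs v" "x \<in> sub w1" "x \<in> sub w2" shows "w1 = w2"
proof -
  have aux: False if a: "a \<in> chs v" "b \<in> chs v" "(a, b) \<in> CH\<^sup>*" "a \<noteq> b" for a b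
  proof -
    from a(3,4) obtain y where "(a, y) \<in> CH\<^sup>*" "ch y b" by (metis (no_types, lifting) case_prodD mem_Collect_eq rtranclE)
    moreover have "ch v b" using a chs_iff by simp
    ultimately have "(a, v) \<in> CH\<^sup>*" using ch_uniq by blast
    hence "d a \<le> d v" using sub_d sub_iff by blast
    moreover have "d v < d a" using ch_d a chs_iff by blast
    ultimately show False by simp
  qed
  have "(w1, w2) \<in> CH\<^sup>* \<or> (w2, w1) \<in> CH\<^sup>*" using comparable assms sub_iff by blast
  thus ?thesis using aux assms by blast
qed

lemma sub_closed: "a \<in> sub w \<Longrightarrow> ch a b \<Longrightarrow> b \<in> sub w"
  by (simp add: sub_iff rtrancl_into_rtrancl)

lemma card_sub: assumes "v \<in> V" shows "card (sub v) = Suc (\<Sum>w\<in>chs v. card (sub w))"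
proof -
  have fU: "finite (\<Union>w\<in>chs v. sub w)" using fin_chs fin_sub chs_V by blast
  have vU: "v \<notin> (\<Union>w\<in>chs v. sub w)" using notin_sub_child by blast
  have "card (\<Union>w\<in>chs v. sub w) = (\<Sum>w\<in>chs v. card (sub w))"
    using fin_chs fin_sub chs_V sub_disj by (intro card_UN_disjoint) blast+
  thus ?thesis using sub_unfold[of v] fU vU by simp
qed

lemma sub_child_sub: "w \<in> chs v \<Longrightarrow> sub w \<subseteq> sub v"
  using sub_unfold[of v] by blast

lemma sub_lt: assumes "v \<in> V" "w \<in> chs v" shows "card (sub w) < card (sub v)"
proof -
  have "sub w \<subset> sub v" using sub_child_sub[OF assms(2)] notin_sub_child[OF assms(2)] sub_self by blast
  thus ?thesis using fin_sub[OF assms(1)] by (rule psubset_card_mono[rotated])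
qed

lemma sub_r: "sub r = V"
  using sub_V[OF rV] root_reach sub_iff by blast

lemma leaf_iff: assumes "v \<in> V" shows "chs v = {} \<longleftrightarrow> card (sub v) = 1"
proof
  assume "chs v = {}" thus "card (sub v) = 1" using sub_unfold[of v] by simp
next
  assume c: "card (sub v) = 1"
  show "chs v = {}"
  proof (rule ccontr)
    assume "chs v \<noteq> {}"
    then obtain w where w: "w \<in> chs v" by blast
    hence "w \<noteq> v" using ch_d chs_iff by fastforce
    moreover have "{v, w} \<subseteq> sub v" using sub_self sub_child_sub[OF w] by blast
    ultimately have "card {v, w} \<le> card (sub v)" using fin_sub[OF assms] by (intro card_mono) 
    thus False using c \<open>w \<noteq> v\<close> by simp
  qed
qed

lemma hasC_unique: "has_C V E r v p \<Longrightarrow> has_C V E r v q \<Longrightarrow> p = q"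
proof (induction arbitrary: q rule: has_C.induct)
  case (leaf v)
  from leaf.prems show ?case
  proof cases
    case leaf thus ?thesis by simp
  next
    case (internal f) thus ?thesis using leaf.hyps by simp
  qed
next
  case (internal v f)
  note IH = internal.IH and H1 = internal.hyps(1)
  from internal.prems show ?case
  proof cases
    case leaf thus ?thesis using H1 by simp
  next
    case (internal g)
    have "\<And>w. w \<in> chs v \<Longrightarrow> f w = g w" using IH internal by blast
    hence "(\<Prod>w\<in>chs v. f w) = (\<Prod>w\<in>chs v. g w)" by (rule prod.cong[OF refl])
    thus ?thesis using internal by simp
  qed
qed

lemma C_all: assumes "v \<in> V"
  shows "has_C V E r v (Cp v) \<and> good (Cp v) (card (sub v)) \<and>
    Cp v = (if chs v = {} then [:2, 1:] else
       monom 1 (card (sub v)) + smult 2 ([:0, 1:] * (\<Prod>w\<in>chs v. Cp w)) + [:2:])"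
  using assms
proof (induction "card (sub v)" arbitrary: v rule: less_induct)
  case less
  show ?case
  proof (cases "chs v = {}")
    case True
    have h: "has_C V E r v [:2, 1:]" using True by (rule has_C.leaf)
    have e: "Cp v = [:2, 1:]" unfolding C_poly_def using h hasC_unique by blast
    have "card (sub v) = 1" using leaf_iff less.prems True by simp
    thus ?thesis using h e True good_leaf by simp
  next
    case False
    have IH: "\<And>w. w \<in> chs v \<Longrightarrow> has_C V E r w (Cp w) \<and> good (Cp w) (card (sub w))"
      using less.hyps sub_lt less.prems chs_V by blast
    define p where "p = monom 1 (card (sub v)) + smult 2 ([:0, 1:] * (\<Prod>w\<in>chs v. Cp w)) + [:2:]"
    have h: "has_C V E r v p" unfolding p_def using False IH by (intro has_C.internal) auto
    have e: "Cp v = p" unfolding C_poly_def using h hasC_unique by blast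
    have "good p (card (sub v))" unfolding p_def
      using fin_chs IH card_sub[OF less.prems] by (intro good_internal) auto
    thus ?thesis using h e False p_def by simp
  qed
qed

lemma C_has: "v \<in> V \<Longrightarrow> has_C V E r v (Cp v)" using C_all by blast
lemma C_good: "v \<in> V \<Longrightarrow> good (Cp v) (card (sub v))" using C_all by blast
lemma C_eq: "v \<in> V \<Longrightarrow> Cp v = (if chs v = {} then [:2, 1:] else
       monom 1 (card (sub v)) + smult 2 ([:0, 1:] * (\<Prod>w\<in>chs v. Cp w)) + [:2:])"
  using C_all by blast

lemma ch_sub_cases:
  assumes "v \<in> V" "a \<in> sub v" "b \<in> sub v"
  shows "ch a b \<longleftrightarrow> ((a = v \<and> b \<in> chs v) \<or> (\<exists>w\<in>chs v. a \<in> sub w \<and> b \<in> sub w \<and> ch a b))"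
proof
  assume c: "ch a b"
  show "(a = v \<and> b \<in> chs v) \<or> (\<exists>w\<in>chs v. a \<in> sub w \<and> b \<in> sub w \<and> ch a b)"
  proof (cases "a = v")
    case True thus ?thesis using c chs_iff by simp
  next
    case False
    then obtain w where "w \<in> chs v" "a \<in> sub w" using assms(2) sub_unfold[of v] by blast
    thus ?thesis using c sub_closed by blast
  qed
qed (auto simp: chs_iff)

lemma child_in_sub_child: "w \<in> chs v \<Longrightarrow> x \<in> chs v \<Longrightarrow> x \<in> sub w \<Longrightarrow> x = w"
  using sub_disj sub_self by metis

end

lemma bij_from_card: "finite A \<Longrightarrow> f ` A = B \<Longrightarrow> card A = card B \<Longrightarrow> bij_betw f A B"
  by (simp add: bij_betw_def eq_card_imp_inj_on)

lemma prop3: "(A \<longleftrightarrow> A') \<Longrightarrow> (B \<longleftrightarrow> B') \<Longrightarrow> (C \<longleftrightarrow> C') \<Longrightarrow> ((A \<and> B) \<or> C) \<longleftrightarrow> ((A' \<and> B') \<or> C')"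
  by blast

lemma poly_cancel:
  fixes Q Q' :: "int poly"
  assumes "monom 1 N + smult 2 ([:0, 1:] * Q) + [:2:] = monom 1 N + smult 2 ([:0, 1:] * Q') + [:2:]"
  shows "Q = Q'"
proof -
  have e: "smult 2 ([:0, 1:] * Q) = smult 2 ([:0, 1:] * Q')" using assms by simp
  have "smult 2 ([:0, 1:] * Q - [:0, 1:] * Q') = 0" using e by (simp only: smult_diff_right diff_self)
  hence "[:0, 1:] * Q = [:0, 1:] * Q'" by simp
  moreover have "[:0, 1:] \<noteq> (0 :: int poly)" by simp
  ultimately show ?thesis by (simp only: mult_cancel_left) simp
qed

lemma child_transfer:
  assumes f: "bij_betw f V V'" and fr: "f r = r'" and rV: "r \<in> V" and EV: "E \<subseteq> V \<times> V"
    and e: "\<forall>u\<in>V. \<forall>v\<in>V. (u, v) \<in> E \<longleftrightarrow> (f u, f v) \<in> E'"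
    and c: "child V E r a b"
  shows "child V' E' r' (f a) (f b)"
proof -
  from c have ab: "(a, b) \<in> E" and br: "b \<noteq> r" and p: "(r, a) \<in> (E \<inter> ((V - {b}) \<times> (V - {b})))\<^sup>*"
    unfolding child_def by auto
  have abV: "a \<in> V" "b \<in> V" using ab EV by auto
  have "(f a, f b) \<in> E'" using e ab abV by blast
  moreover have "f b \<noteq> r'" using br fr f rV abV by (metis bij_betw_def inj_onD)
  moreover have "(f r, f a) \<in> (E' \<inter> ((V' - {f b}) \<times> (V' - {f b})))\<^sup>*" using p
  proof (induction rule: rtrancl_induct)
    case base thus ?case by simp
  next
    case (step y z)
    hence yz: "y \<in> V" "z \<in> V" "y \<noteq> b" "z \<noteq> b" "(y, z) \<in> E" by auto
    have "(f y, f z) \<in> E'" using e yz by blast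
    moreover have "f y \<in> V' - {f b}" "f z \<in> V' - {f b}" using yz abV f
      by (metis DiffI bij_betwE bij_betw_def inj_onD singletonD)+
    ultimately show ?case using step.IH by (meson IntI SigmaI rtrancl.rtrancl_into_rtrancl)
  qed
  ultimately show ?thesis unfolding child_def fr by blast
qed

lemma iso_inv:
  assumes f: "bij_betw f V V'" and fr: "f r = r'" and rV: "r \<in> V"
    and e: "\<forall>u\<in>V. \<forall>v\<in>V. (u, v) \<in> E \<longleftrightarrow> (f u, f v) \<in> E'"
  shows "bij_betw (inv_into V f) V' V \<and> inv_into V f r' = r \<and>
    (\<forall>u\<in>V'. \<forall>v\<in>V'. (u, v) \<in> E' \<longleftrightarrow> (inv_into V f u, inv_into V f v) \<in> E)"
proof (intro conjI ballI)
  show "bij_betw (inv_into V f) V' V" using f by (rule bij_betw_inv_into)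
  show "inv_into V f r' = r" using fr rV f by (metis bij_betw_def inv_into_f_f)
  fix u v assume uv: "u \<in> V'" "v \<in> V'"
  hence "f (inv_into V f u) = u" "f (inv_into V f v) = v" "inv_into V f u \<in> V" "inv_into V f v \<in> V"
    using f by (auto simp: bij_betw_def f_inv_into_f inv_into_into)
  thus "(u, v) \<in> E' \<longleftrightarrow> (inv_into V f u, inv_into V f v) \<in> E" using e by metis
qed

locale rt2 = A: rt V E r + B: rt V' E' r' for V :: "'a set" and E r and V' :: "'b set" and E' r'
begin

lemma iso_from_C:
  assumes "v \<in> V" "v' \<in> V'" "A.Cp v = B.Cp v'"
  shows "\<exists>f. bij_betw f (A.sub v) (B.sub v') \<and> f v = v' \<and>
     (\<forall>a\<in>A.sub v. \<forall>b\<in>A.sub v. A.ch a b \<longleftrightarrow> B.ch (f a) (f b))"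
  using assms
proof (induction "card (A.sub v)" arbitrary: v v' rule: less_induct)
  case less
  have cd: "card (A.sub v) = card (B.sub v')"
    using A.C_good[OF less.prems(1)] B.C_good[OF less.prems(2)] less.prems(3) unfolding good_def by metis
  show ?case
  proof (cases "A.chs v = {}")
    case True
    hence "card (A.sub v) = 1" using A.leaf_iff[OF less.prems(1)] by blast
    hence "card (B.sub v') = 1" using cd by simp
    hence T': "B.chs v' = {}" using B.leaf_iff[OF less.prems(2)] by blast
    have s: "A.sub v = {v}" "B.sub v' = {v'}" using A.sub_unfold[of v] B.sub_unfold[of v'] True T' by simp_all
    have "\<not> A.ch v v" "\<not> B.ch v' v'" using A.ch_d B.ch_d by blast+
    thus ?thesis using s by (intro exI[of _ "\<lambda>_. v'"]) (simp add: bij_betw_def)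
  next
    case False
    have "card (A.sub v) \<noteq> 1" using A.leaf_iff[OF less.prems(1)] False by blast
    hence "card (B.sub v') \<noteq> 1" using cd by simp
    hence F': "B.chs v' \<noteq> {}" using B.leaf_iff[OF less.prems(2)] by blast
    have eA: "A.Cp v = monom 1 (card (A.sub v)) + smult 2 ([:0, 1:] * (\<Prod>w\<in>A.chs v. A.Cp w)) + [:2:]"
      by (subst A.C_eq[OF less.prems(1)]) (simp only: False if_False)
    have eB: "B.Cp v' = monom 1 (card (A.sub v)) + smult 2 ([:0, 1:] * (\<Prod>w\<in>B.chs v'. B.Cp w)) + [:2:]"
      unfolding cd by (subst B.C_eq[OF less.prems(2)]) (simp only: F' if_False)
    have pe: "(\<Prod>w\<in>A.chs v. A.Cp w) = (\<Prod>w\<in>B.chs v'. B.Cp w)"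
      by (rule poly_cancel[of "card (A.sub v)"], rule trans[OF eA[symmetric]], rule trans[OF less.prems(3) eB])
    have pA: "\<And>w. w \<in> A.chs v \<Longrightarrow> prime (A.Cp w)" by (meson A.C_good A.chs_V good_prime subsetD)
    have pB: "\<And>w. w \<in> B.chs v' \<Longrightarrow> prime (B.Cp w)" by (meson B.C_good B.chs_V good_prime subsetD)
    from pA pB pe have "image_mset A.Cp (mset_set (A.chs v)) = image_mset B.Cp (mset_set (B.chs v'))"
      by (rule prod_primes_eq[OF A.fin_chs B.fin_chs])
    hence "\<exists>h. bij_betw h (A.chs v) (B.chs v') \<and> (\<forall>w\<in>A.chs v. B.Cp (h w) = A.Cp w)"
      by (rule mset_match[OF A.fin_chs B.fin_chs])
    then obtain h where h: "bij_betw h (A.chs v) (B.chs v')" "\<forall>w\<in>A.chs v. B.Cp (h w) = A.Cp w"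
      by blast
    have hV: "w \<in> A.chs v \<Longrightarrow> h w \<in> B.chs v'" for w using h(1) bij_betwE by blast
    have "\<forall>w\<in>A.chs v. \<exists>g. bij_betw g (A.sub w) (B.sub (h w)) \<and> g w = h w \<and>
        (\<forall>a\<in>A.sub w. \<forall>b\<in>A.sub w. A.ch a b \<longleftrightarrow> B.ch (g a) (g b))"
    proof
      fix w assume w: "w \<in> A.chs v"
      show "\<exists>g. bij_betw g (A.sub w) (B.sub (h w)) \<and> g w = h w \<and>
        (\<forall>a\<in>A.sub w. \<forall>b\<in>A.sub w. A.ch a b \<longleftrightarrow> B.ch (g a) (g b))"
      proof (rule less.hyps[OF A.sub_lt[OF less.prems(1) w]])
        show "w \<in> V" using w A.chs_V by blast
        show "h w \<in> V'" using hV[OF w] B.chs_V by blast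
        show "A.Cp w = B.Cp (h w)" using h(2) w by simp
      qed
    qed
    from bchoice[OF this] obtain F where F0: "\<forall>w\<in>A.chs v. bij_betw (F w) (A.sub w) (B.sub (h w)) \<and> F w w = h w \<and>
        (\<forall>a\<in>A.sub w. \<forall>b\<in>A.sub w. A.ch a b \<longleftrightarrow> B.ch (F w a) (F w b))"
      by blast
    have F: "\<And>w. w \<in> A.chs v \<Longrightarrow> bij_betw (F w) (A.sub w) (B.sub (h w)) \<and> F w w = h w \<and>
        (\<forall>a\<in>A.sub w. \<forall>b\<in>A.sub w. A.ch a b \<longleftrightarrow> B.ch (F w a) (F w b))"
      using F0 by blast
    define f where "f x = (if x = v then v' else F (THE w. w \<in> A.chs v \<and> x \<in> A.sub w) x)" for x
    have fw: "f x = F w x" if w: "w \<in> A.chs v" "x \<in> A.sub w" for w x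
    proof -
      have "x \<noteq> v" using A.notin_sub_child w by blast
      moreover have "(THE w. w \<in> A.chs v \<and> x \<in> A.sub w) = w"
        using w A.sub_disj by (intro the_equality) blast+
      ultimately show ?thesis unfolding f_def by simp
    qed
    have fv: "f v = v'" unfolding f_def by simp
    have Fin: "F w x \<in> B.sub (h w)" if "w \<in> A.chs v" "x \<in> A.sub w" for w x
      using F[OF that(1)] that(2) bij_betwE by blast
    have img: "f ` A.sub v = B.sub v'"
    proof
      show "f ` A.sub v \<subseteq> B.sub v'"
      proof
        fix y assume "y \<in> f ` A.sub v"
        then obtain x where x: "x \<in> A.sub v" "y = f x" by blast
        show "y \<in> B.sub v'"
        proof (cases "x = v")
          case True thus ?thesis using x fv B.sub_self by simp
        next
          case False
          then obtain w where w: "w \<in> A.chs v" "x \<in> A.sub w" using x A.sub_unfold[of v] by blast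
          hence "y \<in> B.sub (h w)" using x fw Fin by simp
          thus ?thesis using B.sub_child_sub hV w by blast
        qed
      qed
    next
      show "B.sub v' \<subseteq> f ` A.sub v"
      proof
        fix y assume y: "y \<in> B.sub v'"
        show "y \<in> f ` A.sub v"
        proof (cases "y = v'")
          case True thus ?thesis using fv A.sub_self by force
        next
          case False
          then obtain w' where w': "w' \<in> B.chs v'" "y \<in> B.sub w'" using y B.sub_unfold[of v'] by blast
          then obtain w where w: "w \<in> A.chs v" "w' = h w" using h(1) by (metis bij_betw_imp_surj_on imageE)
          then obtain x where x: "x \<in> A.sub w" "y = F w x" using F[OF w(1)] w' by (metis bij_betw_imp_surj_on imageE)
          have "x \<in> A.sub v" using A.sub_child_sub[OF w(1)] x(1) by blast
          moreover have "y = f x" using fw[OF w(1) x(1)] x(2) by simp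
          ultimately show ?thesis by blast
        qed
      qed
    qed
    have bij: "bij_betw f (A.sub v) (B.sub v')"
      using A.fin_sub[OF less.prems(1)] img cd by (rule bij_from_card)
    have fa_v: "f a = v' \<longleftrightarrow> a = v" if a: "a \<in> A.sub v" for a
    proof
      assume fa: "f a = v'"
      show "a = v"
      proof (rule ccontr)
        assume "a \<noteq> v"
        then obtain w where w: "w \<in> A.chs v" "a \<in> A.sub w" using a A.sub_unfold[of v] by blast
        have "f a = F w a" using fw w by simp
        hence "v' \<in> B.sub (h w)" using Fin[OF w] fa by simp
        thus False using B.notin_sub_child hV w by blast
      qed
    qed (simp add: fv)
    have fb_ch: "f b \<in> B.chs v' \<longleftrightarrow> b \<in> A.chs v" if b: "b \<in> A.sub v" for b
    proof
      assume b2: "b \<in> A.chs v"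
      thus "f b \<in> B.chs v'" using fw[OF b2 A.sub_self] F[OF b2] hV by simp
    next
      assume fb: "f b \<in> B.chs v'"
      have "b \<noteq> v"
      proof
        assume "b = v"
        hence "B.ch v' v'" using fb fv B.chs_iff by simp
        thus False using B.ch_d by blast
      qed
      then obtain w where w: "w \<in> A.chs v" "b \<in> A.sub w" using b A.sub_unfold[of v] by blast
      hence "f b \<in> B.sub (h w)" using fw Fin by simp
      hence "f b = h w" using B.child_in_sub_child[OF hV[OF w(1)] fb] by simp
      moreover have "F w w = h w" using F[OF w(1)] by blast
      ultimately have "F w b = F w w" using fw[OF w] by simp
      moreover have "inj_on (F w) (A.sub w)" using F[OF w(1)] bij_betw_def by blast
      ultimately have "b = w" using inj_onD[of "F w" "A.sub w" b w] w(2) A.sub_self by blast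
      thus "b \<in> A.chs v" using w by simp
    qed
    have mid: "(\<exists>w\<in>A.chs v. a \<in> A.sub w \<and> b \<in> A.sub w \<and> A.ch a b) \<longleftrightarrow>
       (\<exists>w'\<in>B.chs v'. f a \<in> B.sub w' \<and> f b \<in> B.sub w' \<and> B.ch (f a) (f b))"
      if ab: "a \<in> A.sub v" "b \<in> A.sub v" for a b
    proof
      assume "\<exists>w\<in>A.chs v. a \<in> A.sub w \<and> b \<in> A.sub w \<and> A.ch a b"
      then obtain w where w: "w \<in> A.chs v" "a \<in> A.sub w" "b \<in> A.sub w" "A.ch a b" by blast
      have "f a = F w a" "f b = F w b" using fw w by simp_all
      moreover have "B.ch (F w a) (F w b)" using F[OF w(1)] w by blast
      moreover have "F w a \<in> B.sub (h w)" "F w b \<in> B.sub (h w)" using Fin w by blast+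
      ultimately show "\<exists>w'\<in>B.chs v'. f a \<in> B.sub w' \<and> f b \<in> B.sub w' \<and> B.ch (f a) (f b)"
        using hV[OF w(1)] by (intro bexI[of _ "h w"]) simp_all
    next
      assume "\<exists>w'\<in>B.chs v'. f a \<in> B.sub w' \<and> f b \<in> B.sub w' \<and> B.ch (f a) (f b)"
      then obtain w' where w': "w' \<in> B.chs v'" "f a \<in> B.sub w'" "f b \<in> B.sub w'" "B.ch (f a) (f b)" by blast
      have "a \<noteq> v"
      proof
        assume "a = v" hence "v' \<in> B.sub w'" using w'(2) fv by simp
        thus False using B.notin_sub_child[OF w'(1)] by simp
      qed
      then obtain w1 where w1: "w1 \<in> A.chs v" "a \<in> A.sub w1" using ab A.sub_unfold[of v] by blast
      have "b \<noteq> v"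
      proof
        assume "b = v" hence "v' \<in> B.sub w'" using w'(3) fv by simp
        thus False using B.notin_sub_child[OF w'(1)] by simp
      qed
      then obtain w2 where w2: "w2 \<in> A.chs v" "b \<in> A.sub w2" using ab A.sub_unfold[of v] by blast
      have "f a \<in> B.sub (h w1)" using fw[OF w1] Fin[OF w1] by simp
      hence "h w1 = w'" using B.sub_disj[OF hV[OF w1(1)] w'(1) _ w'(2)] by blast
      have "f b \<in> B.sub (h w2)" using fw[OF w2] Fin[OF w2] by simp
      hence "h w2 = w'" using B.sub_disj[OF hV[OF w2(1)] w'(1) _ w'(3)] by blast
      have "inj_on h (A.chs v)" using h(1) bij_betw_def by blast
      hence "w1 = w2" using inj_onD[of h "A.chs v" w1 w2] \<open>h w1 = w'\<close> \<open>h w2 = w'\<close> w1(1) w2(1) by simp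
      have "f a = F w1 a" "f b = F w1 b" using fw w1 w2 \<open>w1 = w2\<close> by simp_all
      hence "B.ch (F w1 a) (F w1 b)" using w'(4) by simp
      hence "A.ch a b" using F[OF w1(1)] w1 w2 \<open>w1 = w2\<close> by blast
      thus "\<exists>w\<in>A.chs v. a \<in> A.sub w \<and> b \<in> A.sub w \<and> A.ch a b" using w1 w2 \<open>w1 = w2\<close> by blast
    qed
    have "\<forall>a\<in>A.sub v. \<forall>b\<in>A.sub v. A.ch a b \<longleftrightarrow> B.ch (f a) (f b)"
    proof (intro ballI)
      fix a b assume ab: "a \<in> A.sub v" "b \<in> A.sub v"
      have fab: "f a \<in> B.sub v'" "f b \<in> B.sub v'" using img ab by blast+
      show "A.ch a b \<longleftrightarrow> B.ch (f a) (f b)"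
        by (rule trans[OF A.ch_sub_cases[OF less.prems(1) ab]
              trans[OF prop3[OF fa_v[OF ab(1), symmetric] fb_ch[OF ab(2), symmetric] mid[OF ab]]
                B.ch_sub_cases[OF less.prems(2) fab, symmetric]]])
    qed
    thus ?thesis using bij fv by blast
  qed
qed

lemma C_imp_iso:
  assumes "C_tree V E r = C_tree V' E' r'"
  shows "rooted_tree_iso V E r V' E' r'"
proof -
  obtain f where f: "bij_betw f (A.sub r) (B.sub r')" "f r = r'"
     "\<forall>a\<in>A.sub r. \<forall>b\<in>A.sub r. A.ch a b \<longleftrightarrow> B.ch (f a) (f b)"
    using iso_from_C[OF A.rV B.rV] assms unfolding C_tree_def by blast
  have f': "bij_betw f V V'" using f(1) A.sub_r B.sub_r by simp
  have "\<forall>u\<in>V. \<forall>v\<in>V. (u, v) \<in> E \<longleftrightarrow> (f u, f v) \<in> E'"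
  proof (intro ballI)
    fix u v assume uv: "u \<in> V" "v \<in> V"
    hence fuv: "f u \<in> V'" "f v \<in> V'" using f' bij_betwE by blast+
    show "(u, v) \<in> E \<longleftrightarrow> (f u, f v) \<in> E'"
      unfolding A.E_iff[OF uv] B.E_iff[OF fuv] using f(3) uv A.sub_r by blast
  qed
  thus ?thesis unfolding rooted_tree_iso_def using f' f(2) by blast
qed


lemma iso_imp_C:
  assumes iso: "rooted_tree_iso V E r V' E' r'"
  shows "C_tree V E r = C_tree V' E' r'"
proof -
  obtain f where f: "bij_betw f V V'" "f r = r'" and e: "\<forall>u\<in>V. \<forall>v\<in>V. (u, v) \<in> E \<longleftrightarrow> (f u, f v) \<in> E'"
    using iso unfolding rooted_tree_iso_def by blast
  define g where "g = inv_into V f"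
  have g: "bij_betw g V' V" "g r' = r" "\<forall>u\<in>V'. \<forall>v\<in>V'. (u, v) \<in> E' \<longleftrightarrow> (g u, g v) \<in> E"
    using iso_inv[OF f A.rV e] unfolding g_def by blast+
  have gf: "\<And>x. x \<in> V \<Longrightarrow> g (f x) = x" using f unfolding g_def by (simp add: bij_betw_def inv_into_f_f)
  have fg: "\<And>y. y \<in> V' \<Longrightarrow> f (g y) = y" using f unfolding g_def by (simp add: bij_betw_def f_inv_into_f)
  have fV: "\<And>x. x \<in> V \<Longrightarrow> f x \<in> V'" using f bij_betwE by blast
  have chf: "\<And>a b. A.ch a b \<Longrightarrow> B.ch (f a) (f b)" using child_transfer[OF f A.rV A.EV e] .
  have chg: "\<And>a b. B.ch a b \<Longrightarrow> A.ch (g a) (g b)" using child_transfer[OF g(1,2) B.rV B.EV g(3)] .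
  have injf: "inj_on f V" using f bij_betw_def by blast
  have subT: "B.sub (f v) = f ` A.sub v" if v: "v \<in> V" for v
  proof
    show "f ` A.sub v \<subseteq> B.sub (f v)"
    proof
      fix y assume "y \<in> f ` A.sub v"
      then obtain x where x: "x \<in> A.sub v" "y = f x" by blast
      have "(v, x) \<in> A.CH\<^sup>*" using x(1) A.sub_iff by blast
      hence "(f v, f x) \<in> B.CH\<^sup>*"
      proof (induction rule: rtrancl_induct)
        case base thus ?case by simp
      next
        case (step y z)
        hence "B.ch (f y) (f z)" using chf by simp
        thus ?case using step.IH by (simp add: rtrancl_into_rtrancl)
      qed
      thus "y \<in> B.sub (f v)" using x(2) B.sub_iff by simp
    qed
  next
    show "B.sub (f v) \<subseteq> f ` A.sub v"
    proof
      fix y assume y: "y \<in> B.sub (f v)"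
      have yV: "y \<in> V'" using B.sub_V[OF fV[OF v]] y by blast
      have "(f v, y) \<in> B.CH\<^sup>*" using y B.sub_iff by blast
      hence "(g (f v), g y) \<in> A.CH\<^sup>*"
      proof (induction rule: rtrancl_induct)
        case base thus ?case by simp
      next
        case (step y z)
        hence "A.ch (g y) (g z)" using chg by simp
        thus ?case using step.IH by (simp add: rtrancl_into_rtrancl)
      qed
      hence "g y \<in> A.sub v" using gf[OF v] A.sub_iff by simp
      moreover have "y = f (g y)" using fg[OF yV] by simp
      ultimately show "y \<in> f ` A.sub v" by blast
    qed
  qed
  have chsT: "B.chs (f v) = f ` A.chs v" if v: "v \<in> V" for v
  proof
    show "B.chs (f v) \<subseteq> f ` A.chs v"
    proof
      fix w' assume w': "w' \<in> B.chs (f v)"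
      hence c: "B.ch (f v) w'" using B.chs_iff by blast
      hence "w' \<in> V'" using B.ch_V by blast
      moreover have "A.ch v (g w')" using chg[OF c] gf[OF v] by simp
      ultimately show "w' \<in> f ` A.chs v" using fg A.chs_iff by (metis imageI)
    qed
  next
    show "f ` A.chs v \<subseteq> B.chs (f v)" using chf A.chs_iff B.chs_iff by blast
  qed
  have CT: "B.Cp (f v) = A.Cp v" if "v \<in> V" for v
    using that
  proof (induction "card (A.sub v)" arbitrary: v rule: less_induct)
    case less
    have cs: "card (B.sub (f v)) = card (A.sub v)"
      unfolding subT[OF less.prems] using inj_on_subset[OF injf A.sub_V[OF less.prems]] by (rule card_image)
    have injc: "inj_on f (A.chs v)" using inj_on_subset[OF injf A.chs_V] .
    have pr: "(\<Prod>w\<in>B.chs (f v). B.Cp w) = (\<Prod>w\<in>A.chs v. A.Cp w)"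
    proof -
      have "(\<Prod>w\<in>B.chs (f v). B.Cp w) = (\<Prod>w\<in>A.chs v. B.Cp (f w))"
        unfolding chsT[OF less.prems] using injc by (simp add: prod.reindex)
      also have "\<dots> = (\<Prod>w\<in>A.chs v. A.Cp w)"
      proof (rule prod.cong[OF refl])
        fix w assume w: "w \<in> A.chs v"
        show "B.Cp (f w) = A.Cp w"
          using less.hyps[OF A.sub_lt[OF less.prems w]] w A.chs_V by blast
      qed
      finally show ?thesis .
    qed
    have ce: "B.chs (f v) = {} \<longleftrightarrow> A.chs v = {}" using chsT[OF less.prems] by simp
    show ?case
      apply (subst B.C_eq[OF fV[OF less.prems]])
      apply (subst A.C_eq[OF less.prems])
      using ce pr cs by simp
  qed
  show ?thesis unfolding C_tree_def using CT[OF A.rV] f(2) by simp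
qed

end

theorem mainTheorem3:
  fixes V :: "'a set" and E :: "('a \<times> 'a) set" and r :: 'a
    and V' :: "'b set" and E' :: "('b \<times> 'b) set" and r' :: 'b
  assumes "rooted_tree V E r" and "rooted_tree V' E' r'"
  shows "C_tree V E r = C_tree V' E' r' \<longleftrightarrow> rooted_tree_iso V E r V' E' r'"
proof -
  interpret rt2 V E r V' E' r' using assms by (simp add: rt2_def rt_def)
  show ?thesis using C_imp_iso iso_imp_C by blast
qed

end
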